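(* Assume the setting described in the context. Consider Algorithm 2 with a deterministic rule for choosing $f$ in each inner iteration, and let $s\ge1$. Then: (a) for every $\tau\in\mathrm{BadPar}(s)$ the longest chain of $\tau$ has length exactly $s$; (b) the set $\mathrm{BadPar}(s)$ is valid.
   Context: Setting: $\Omega$ is a finite set and $F$ a finite set of flaws, each a nonempty subset of $\Omega$; $F_\sigma=\{f:\sigma\in f\}$. For $\sigma\in\Omega$ and $f\in F_\sigma$ there is a probability distribution $\rho(\cdot\mid f,\sigma)$ with support $A(f,\sigma)$. A walk is $\sigma_1\xrightarrow{w_1}\sigma_2\cdots\xrightarrow{w_t}\sigma_{t+1}$ with $w_i\in F_{\sigma_i}$ and $\sigma_{i+1}\in A(w_i,\sigma_i)$, with word $w_1\ldots w_t$. $\sim$ is a symmetric relation on $F$ (loops allowed), with $\Gamma(f)=\{g:f\sim g\}$, $\Gamma^+(f)=\Gamma(f)\cup\{f\}$ and $\Gamma^+(S)=\bigcup_{f\in S}\Gamma^+(f)$. It is assumed that for every step $\sigma\xrightarrow{f}\sigma'$, $F_{\sigma'}\subseteq(F_\sigma\setminus\{f\})\cup\Gamma(f)$. Write $f\cong g$ if $f\sim g$ or $f=g$. Algorithm 2 (with initial distribution $\omega^{\mathrm{init}}$). Sample $\sigma$ from $\omega^{\mathrm{init}}$. While $F_\sigma\neq\varnothing$, perform a round: $I:=\varnothing$; while $F_\sigma\setminus\Gamma^+(I)\ne\varnothing$, pick $f\in F_\sigma\setminus\Gamma^+(I)$ by the deterministic rule, sample $\sigma'$ from $\rho(\cdot\mid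 f,\sigma)$, set $\sigma\leftarrow\sigma'$ and $I\leftarrow I\cup\{f\}$. $\mathrm{BadPar}(s)$: for each execution (with positive probability) having at least $s$ rounds, take the walk consisting of all steps of the first $s-1$ rounds followed by the first step of round $s$. $\mathrm{BadPar}(s)$ is the set of all such walks. A chain of a walk with word $w_1\ldots w_t$ is a subsequence $u_1\ldots u_m$ of $w_1\ldots w_t$ with $u_i\cong u_{i+1}$ for $i\in[m-1]$; its length is $m$. A deterministic strategy assigns to each walk whose last state $\sigma$ is flawed a flaw in $F_\sigma$; a walk follows it if each $w_i$ is the flaw assigned to the prefix ending at $\sigma_i$. A set of walks is valid if all its walks follow one common deterministic strategy and no walk in it is a proper prefix (a different initial segment) of another walk in it. *)

theory Defs
  imports "HOL-Probability.Probability_Mass_Function" "HOL-Library.Sublist"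
begin

text \<open>A walk is represented by its initial state and the list of its steps
  (flaw addressed, resulting state).\<close>
type_synonym 's walk = "'s \<times> ('s set \<times> 's) list"

definition flawsAt :: "'s set set \<Rightarrow> 's \<Rightarrow> 's set set" where
  "flawsAt F \<sigma> = {f \<in> F. \<sigma> \<in> f}"

definition Gam :: "'s set set \<Rightarrow> ('s set \<Rightarrow> 's set \<Rightarrow> bool) \<Rightarrow> 's set \<Rightarrow> 's set set" where
  "Gam F sim f = {g \<in> F. sim f g}"

definition GamP :: "'s set set \<Rightarrow> ('s set \<Rightarrow> 's set \<Rightarrow> bool) \<Rightarrow> 's set \<Rightarrow> 's set set" where
  "GamP F sim f = Gam F sim f \<union> {f}"

definition GamPS :: "'s set set \<Rightarrow> ('s set \<Rightarrow> 's set \<Rightarrow> bool) \<Rightarrow> 's set set \<Rightarrow> 's set set" where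
  "GamPS F sim S = (\<Union>f\<in>S. GamP F sim f)"

definition wstates :: "'s walk \<Rightarrow> 's list" where
  "wstates \<tau> = fst \<tau> # map snd (snd \<tau>)"

definition wlast :: "'s walk \<Rightarrow> 's" where
  "wlast \<tau> = last (wstates \<tau>)"

definition word :: "'s walk \<Rightarrow> 's set list" where
  "word \<tau> = map fst (snd \<tau>)"

definition is_walk :: "'s set set \<Rightarrow> ('s set \<Rightarrow> 's \<Rightarrow> 's pmf) \<Rightarrow> 's walk \<Rightarrow> bool" where
  "is_walk F \<rho> \<tau> = (\<forall>i < length (snd \<tau>).
      fst (snd \<tau> ! i) \<in> flawsAt F (wstates \<tau> ! i) \<and>
      snd (snd \<tau> ! i) \<in> set_pmf (\<rho> (fst (snd \<tau> ! i)) (wstates \<tau> ! i)))"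

text \<open>Reachable (positive-probability) partial executions of Algorithm 2:
  \<open>alg2_reach \<dots> h I k j\<close> means that the execution can produce the walk \<open>h\<close>,
  with current inner set \<open>I\<close>, \<open>k\<close> rounds started so far, and \<open>j\<close> steps
  performed in the current (k-th) round.  The deterministic rule may depend on the
  whole history \<open>h\<close> and on \<open>I\<close>.\<close>
inductive alg2_reach ::
  "'s set set \<Rightarrow> ('s set \<Rightarrow> 's set \<Rightarrow> bool) \<Rightarrow> ('s set \<Rightarrow> 's \<Rightarrow> 's pmf) \<Rightarrow> 's pmf
   \<Rightarrow> ('s walk \<Rightarrow> 's set set \<Rightarrow> 's set) \<Rightarrow> 's walk \<Rightarrow> 's set set \<Rightarrow> nat \<Rightarrow> nat \<Rightarrow> bool"
  for F sim \<rho> \<omega> rule where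
  init: "\<sigma> \<in> set_pmf \<omega> \<Longrightarrow> alg2_reach F sim \<rho> \<omega> rule (\<sigma>, []) {} 0 0"
| cont: "alg2_reach F sim \<rho> \<omega> rule h I k j \<Longrightarrow> I \<noteq> {} \<Longrightarrow>
         flawsAt F (wlast h) - GamPS F sim I \<noteq> {} \<Longrightarrow> f = rule h I \<Longrightarrow>
         \<sigma>' \<in> set_pmf (\<rho> f (wlast h)) \<Longrightarrow>
         alg2_reach F sim \<rho> \<omega> rule (fst h, snd h @ [(f, \<sigma>')]) (I \<union> {f}) k (Suc j)"
| new: "alg2_reach F sim \<rho> \<omega> rule h I k j \<Longrightarrow>
        (I = {} \<or> flawsAt F (wlast h) - GamPS F sim I = {}) \<Longrightarrow>
        flawsAt F (wlast h) \<noteq> {} \<Longrightarrow> f = rule h {} \<Longrightarrow>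
        \<sigma>' \<in> set_pmf (\<rho> f (wlast h)) \<Longrightarrow>
        alg2_reach F sim \<rho> \<omega> rule (fst h, snd h @ [(f, \<sigma>')]) {f} (Suc k) 1"

definition BadPar ::
  "'s set set \<Rightarrow> ('s set \<Rightarrow> 's set \<Rightarrow> bool) \<Rightarrow> ('s set \<Rightarrow> 's \<Rightarrow> 's pmf) \<Rightarrow> 's pmf
   \<Rightarrow> ('s walk \<Rightarrow> 's set set \<Rightarrow> 's set) \<Rightarrow> nat \<Rightarrow> 's walk set" where
  "BadPar F sim \<rho> \<omega> rule s = {h. \<exists>I. alg2_reach F sim \<rho> \<omega> rule h I s 1}"

definition is_chain :: "('s set \<Rightarrow> 's set \<Rightarrow> bool) \<Rightarrow> 's set list \<Rightarrow> 's set list \<Rightarrow> bool" where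
  "is_chain sim us ws = (subseq us ws \<and> successively (\<lambda>f g. sim f g \<or> f = g) us)"

definition longest_chain :: "('s set \<Rightarrow> 's set \<Rightarrow> bool) \<Rightarrow> 's set list \<Rightarrow> nat" where
  "longest_chain sim ws = Max (length ` {us. is_chain sim us ws})"

definition det_strategy :: "'s set set \<Rightarrow> ('s set \<Rightarrow> 's \<Rightarrow> 's pmf) \<Rightarrow> ('s walk \<Rightarrow> 's set) \<Rightarrow> bool" where
  "det_strategy F \<rho> S = (\<forall>\<tau>. is_walk F \<rho> \<tau> \<longrightarrow> flawsAt F (wlast \<tau>) \<noteq> {} \<longrightarrow>
      S \<tau> \<in> flawsAt F (wlast \<tau>))"

definition follows :: "('s walk \<Rightarrow> 's set) \<Rightarrow> 's walk \<Rightarrow> bool" where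
  "follows S \<tau> = (\<forall>i < length (snd \<tau>). fst (snd \<tau> ! i) = S (fst \<tau>, take i (snd \<tau>)))"

definition proper_prefix :: "'s walk \<Rightarrow> 's walk \<Rightarrow> bool" where
  "proper_prefix \<tau> \<tau>' = (fst \<tau> = fst \<tau>' \<and> strict_prefix (snd \<tau>) (snd \<tau>'))"

definition valid :: "'s set set \<Rightarrow> ('s set \<Rightarrow> 's \<Rightarrow> 's pmf) \<Rightarrow> 's walk set \<Rightarrow> bool" where
  "valid F \<rho> W = ((\<exists>S. det_strategy F \<rho> S \<and> (\<forall>\<tau>\<in>W. follows S \<tau>)) \<and>
                  (\<forall>\<tau>\<in>W. \<forall>\<tau>'\<in>W. \<not> proper_prefix \<tau> \<tau>'))"

end

theory Submission
  imports Defs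
begin


lemma chain_snoc_cases:
  assumes "is_chain sim us (ws @ [x])"
  shows "is_chain sim us ws \<or> (\<exists>us'. us = us' @ [x] \<and> is_chain sim us' ws \<and>
           (us' \<noteq> [] \<longrightarrow> sim (last us') x \<or> last us' = x))"
proof -
  from assms have s: "subseq us (ws @ [x])" and c: "successively (\<lambda>f g. sim f g \<or> f = g) us"
    by (auto simp: is_chain_def)
  from s obtain a b where ab: "us = a @ b" "subseq a ws" "subseq b [x]" by (rule subseq_appendE)
  have "b = [] \<or> b = [x]" using ab(3)
    by (cases b) (auto simp: list_emb_Cons_iff2 split: if_splits)
  then show ?thesis using ab c
    by (auto simp: is_chain_def successively_append_iff)
qed

lemma chain_ext: "is_chain sim us ws \<Longrightarrow> is_chain sim us (ws @ [x])"
  by (auto simp: is_chain_def subseq_rev_drop_many)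

lemma chain_snoc: "is_chain sim us ws \<Longrightarrow> (us \<noteq> [] \<longrightarrow> sim (last us) x \<or> last us = x)
   \<Longrightarrow> is_chain sim (us @ [x]) (ws @ [x])"
  by (auto simp: is_chain_def successively_append_iff)



lemma word_snoc[simp]: "word (a, xs @ [(f, \<sigma>')]) = word (a, xs) @ [f]"
  by (simp add: word_def)

lemma wlast_snoc[simp]: "wlast (a, xs @ [(f, \<sigma>')]) = \<sigma>'"
  by (simp add: wlast_def wstates_def)

lemma GamPS_mono: "I \<subseteq> J \<Longrightarrow> GamPS F sim I \<subseteq> GamPS F sim J"
  by (auto simp: GamPS_def)

lemma GamPS_empty[simp]: "GamPS F sim {} = {}"
  by (simp add: GamPS_def)

lemma in_GamPS: "x \<in> GamPS F sim I \<longleftrightarrow> (\<exists>g\<in>I. (x \<in> F \<and> sim g x) \<or> x = g)"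
  by (auto simp: GamPS_def GamP_def Gam_def)

lemma chain_inv:
  assumes step: "\<forall>\<sigma> f \<sigma>'. f \<in> flawsAt F \<sigma> \<longrightarrow> \<sigma>' \<in> set_pmf (\<rho> f \<sigma>) \<longrightarrow>
                 flawsAt F \<sigma>' \<subseteq> (flawsAt F \<sigma> - {f}) \<union> Gam F sim f"
    and rule_ok: "\<forall>h I. flawsAt F (wlast h) - GamPS F sim I \<noteq> {} \<longrightarrow>
                 rule h I \<in> flawsAt F (wlast h) - GamPS F sim I"
  shows "alg2_reach F sim \<rho> \<omega> rule h I k j \<Longrightarrow>
     (I = {} \<longleftrightarrow> k = 0) \<and>
     (\<forall>us. is_chain sim us (word h) \<longrightarrow> length us \<le> k \<and> (length us = k \<and> us \<noteq> [] \<longrightarrow> last us \<in> I)) \<and>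
     (\<forall>g\<in>I. \<exists>us. is_chain sim us (word h) \<and> length us = k \<and> us \<noteq> [] \<and> last us = g) \<and>
     (k \<ge> 1 \<longrightarrow> (\<forall>x \<in> flawsAt F (wlast h) - GamPS F sim I. \<exists>us. is_chain sim us (word h) \<and>
         Suc (length us) = k \<and> (us \<noteq> [] \<longrightarrow> sim (last us) x \<or> last us = x)))"
proof (induction rule: alg2_reach.induct)
  case (init \<sigma>)
  then show ?case by (auto simp: is_chain_def word_def)
next
  case (cont h I k j f \<sigma>')
  obtain a xs where h: "h = (a, xs)" by (cases h)
  from cont.IH have I0: "I = {} \<longleftrightarrow> k = 0"
    and UB: "\<And>us. is_chain sim us (word h) \<Longrightarrow> length us \<le> k \<and> (length us = k \<and> us \<noteq> [] \<longrightarrow> last us \<in> I)"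
    and A: "\<And>g. g\<in>I \<Longrightarrow> \<exists>us. is_chain sim us (word h) \<and> length us = k \<and> us \<noteq> [] \<and> last us = g"
    and B: "\<And>x. k \<ge> 1 \<Longrightarrow> x \<in> flawsAt F (wlast h) - GamPS F sim I \<Longrightarrow> \<exists>us. is_chain sim us (word h) \<and>
         Suc (length us) = k \<and> (us \<noteq> [] \<longrightarrow> sim (last us) x \<or> last us = x)"
    by blast+
  have k1: "k \<ge> 1" using I0 cont.hyps(2) by auto
  have fin: "f \<in> flawsAt F (wlast h) - GamPS F sim I" using rule_ok cont.hyps(3,4) by blast
  have stp: "flawsAt F \<sigma>' \<subseteq> (flawsAt F (wlast h) - {f}) \<union> Gam F sim f"
    using step fin cont.hyps(5) by blast
  have fF: "f \<in> F" using fin by (auto simp: flawsAt_def)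
  show ?case
  proof (intro conjI)
    show "(I \<union> {f} = {}) = (k = 0)" using k1 by auto
    show "\<forall>us. is_chain sim us (word (fst h, snd h @ [(f, \<sigma>')])) \<longrightarrow>
        length us \<le> k \<and> (length us = k \<and> us \<noteq> [] \<longrightarrow> last us \<in> I \<union> {f})"
    proof (intro allI impI)
      fix us assume "is_chain sim us (word (fst h, snd h @ [(f, \<sigma>')]))"
      then have "is_chain sim us (word h @ [f])" by (simp add: h)
      then consider "is_chain sim us (word h)" | us' where "us = us' @ [f]" "is_chain sim us' (word h)"
          "us' \<noteq> [] \<longrightarrow> sim (last us') f \<or> last us' = f"
        using chain_snoc_cases by blast
      then show "length us \<le> k \<and> (length us = k \<and> us \<noteq> [] \<longrightarrow> last us \<in> I \<union> {f})"
      proof cases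
        case 1 then show ?thesis using UB by blast
      next
        case 2
        have "length us' < k"
        proof (rule ccontr)
          assume "\<not> length us' < k"
          then have "length us' = k" using UB[OF 2(2)] by auto
          then have "us' \<noteq> []" "last us' \<in> I" using UB[OF 2(2)] k1 by auto
          then have "f \<in> GamPS F sim I" using 2(3) fF by (auto simp: in_GamPS)
          then show False using fin by blast
        qed
        then show ?thesis using 2 by auto
      qed
    qed
    show "\<forall>g\<in>I \<union> {f}. \<exists>us. is_chain sim us (word (fst h, snd h @ [(f, \<sigma>')])) \<and> length us = k \<and> us \<noteq> [] \<and> last us = g"
    proof
      fix g assume "g \<in> I \<union> {f}"
      then consider "g \<in> I" | "g = f" by blast
      then show "\<exists>us. is_chain sim us (word (fst h, snd h @ [(f, \<sigma>')])) \<and> length us = k \<and> us \<noteq> [] \<and> last us = g"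
      proof cases
        case 1 then show ?thesis using A[OF 1] chain_ext by (fastforce simp: h)
      next
        case 2
        obtain us where "is_chain sim us (word h)" "Suc (length us) = k" "us \<noteq> [] \<longrightarrow> sim (last us) f \<or> last us = f"
          using B[OF k1 fin] by blast
        then show ?thesis using chain_snoc[of sim us "word h" f] 2 by (intro exI[of _ "us @ [f]"]) (auto simp: h)
      qed
    qed
    show "1 \<le> k \<longrightarrow> (\<forall>x\<in>flawsAt F (wlast (fst h, snd h @ [(f, \<sigma>')])) - GamPS F sim (I \<union> {f}).
        \<exists>us. is_chain sim us (word (fst h, snd h @ [(f, \<sigma>')])) \<and> Suc (length us) = k \<and> (us \<noteq> [] \<longrightarrow> sim (last us) x \<or> last us = x))"
    proof (intro impI ballI)
      fix x assume x: "x \<in> flawsAt F (wlast (fst h, snd h @ [(f, \<sigma>')])) - GamPS F sim (I \<union> {f})"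
      then have x1: "x \<in> flawsAt F \<sigma>'" "x \<notin> GamPS F sim (I \<union> {f})" by (auto simp: h)
      have "x \<notin> Gam F sim f" using x1(2) by (auto simp: in_GamPS Gam_def)
      then have "x \<in> flawsAt F (wlast h)" using stp x1(1) by auto
      moreover have "x \<notin> GamPS F sim I" using x1(2) GamPS_mono[of I "I \<union> {f}"] by blast
      ultimately obtain us where "is_chain sim us (word h)" "Suc (length us) = k" "us \<noteq> [] \<longrightarrow> sim (last us) x \<or> last us = x"
        using B[OF k1] by blast
      then show "\<exists>us. is_chain sim us (word (fst h, snd h @ [(f, \<sigma>')])) \<and> Suc (length us) = k \<and> (us \<noteq> [] \<longrightarrow> sim (last us) x \<or> last us = x)"
        using chain_ext by (fastforce simp: h)
    qed
  qed
next
  case (new h I k j f \<sigma>')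
  obtain a xs where h: "h = (a, xs)" by (cases h)
  from new.IH have I0: "I = {} \<longleftrightarrow> k = 0"
    and UB: "\<And>us. is_chain sim us (word h) \<Longrightarrow> length us \<le> k \<and> (length us = k \<and> us \<noteq> [] \<longrightarrow> last us \<in> I)"
    and A: "\<And>g. g\<in>I \<Longrightarrow> \<exists>us. is_chain sim us (word h) \<and> length us = k \<and> us \<noteq> [] \<and> last us = g"
    by blast+
  have fin: "f \<in> flawsAt F (wlast h)" using rule_ok[rule_format, of h "{}"] new.hyps(3,4) by simp
  have stp: "flawsAt F \<sigma>' \<subseteq> (flawsAt F (wlast h) - {f}) \<union> Gam F sim f"
    using step fin new.hyps(5) by blast
  have fF: "f \<in> F" using fin by (auto simp: flawsAt_def)
  have cov: "k \<ge> 1 \<Longrightarrow> flawsAt F (wlast h) \<subseteq> GamPS F sim I" using I0 new.hyps(2) by auto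
  show ?case
  proof (intro conjI)
    show "({f} = {}) = (Suc k = 0)" by auto
    show "\<forall>us. is_chain sim us (word (fst h, snd h @ [(f, \<sigma>')])) \<longrightarrow>
        length us \<le> Suc k \<and> (length us = Suc k \<and> us \<noteq> [] \<longrightarrow> last us \<in> {f})"
    proof (intro allI impI)
      fix us assume "is_chain sim us (word (fst h, snd h @ [(f, \<sigma>')]))"
      then have "is_chain sim us (word h @ [f])" by (simp add: h)
      then consider "is_chain sim us (word h)" | us' where "us = us' @ [f]" "is_chain sim us' (word h)"
        using chain_snoc_cases by blast
      then show "length us \<le> Suc k \<and> (length us = Suc k \<and> us \<noteq> [] \<longrightarrow> last us \<in> {f})"
      proof cases
        case 1 then show ?thesis using UB by force
      next
        case 2 then show ?thesis using UB[OF 2(2)] by auto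
      qed
    qed
    have ch: "\<exists>us. is_chain sim us (word (fst h, snd h @ [(f, \<sigma>')])) \<and> length us = Suc k \<and> us \<noteq> [] \<and> last us = f"
    proof (cases "k = 0")
      case True
      have "is_chain sim ([] @ [f]) (word h @ [f])" by (rule chain_snoc) (auto simp: is_chain_def)
      then show ?thesis using True by (intro exI[of _ "[f]"]) (auto simp: h)
    next
      case False
      then have "f \<in> GamPS F sim I" using cov fin by auto
      then obtain g where g: "g \<in> I" "sim g f \<or> g = f" by (auto simp: in_GamPS)
      obtain us where "is_chain sim us (word h)" "length us = k" "us \<noteq> []" "last us = g" using A[OF g(1)] by blast
      then show ?thesis using chain_snoc[of sim us "word h" f] g(2) by (intro exI[of _ "us @ [f]"]) (auto simp: h)
    qed
    then show "\<forall>g\<in>{f}. \<exists>us. is_chain sim us (word (fst h, snd h @ [(f, \<sigma>')])) \<and> length us = Suc k \<and> us \<noteq> [] \<and> last us = g"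
      by blast
    show "1 \<le> Suc k \<longrightarrow> (\<forall>x\<in>flawsAt F (wlast (fst h, snd h @ [(f, \<sigma>')])) - GamPS F sim {f}.
        \<exists>us. is_chain sim us (word (fst h, snd h @ [(f, \<sigma>')])) \<and> Suc (length us) = Suc k \<and> (us \<noteq> [] \<longrightarrow> sim (last us) x \<or> last us = x))"
    proof (intro impI ballI)
      fix x assume x: "x \<in> flawsAt F (wlast (fst h, snd h @ [(f, \<sigma>')])) - GamPS F sim {f}"
      then have x1: "x \<in> flawsAt F \<sigma>'" "x \<notin> GamPS F sim {f}" by (auto simp: h)
      have "x \<notin> Gam F sim f" using x1(2) by (auto simp: in_GamPS Gam_def)
      then have xin: "x \<in> flawsAt F (wlast h)" using stp x1(1) by auto
      show "\<exists>us. is_chain sim us (word (fst h, snd h @ [(f, \<sigma>')])) \<and> Suc (length us) = Suc k \<and> (us \<noteq> [] \<longrightarrow> sim (last us) x \<or> last us = x)"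
      proof (cases "k = 0")
        case True
        then show ?thesis by (intro exI[of _ "[]"]) (auto simp: is_chain_def)
      next
        case False
        then have "x \<in> GamPS F sim I" using cov xin by auto
        then obtain g where g: "g \<in> I" "sim g x \<or> g = x" by (auto simp: in_GamPS)
        obtain us where "is_chain sim us (word h)" "length us = k" "us \<noteq> []" "last us = g" using A[OF g(1)] by blast
        then show ?thesis using chain_ext g(2) by (fastforce simp: h)
      qed
    qed
  qed
qed


lemma reach_snoc_ne: "alg2_reach F sim \<rho> \<omega> rule h I k j \<Longrightarrow> snd h = [] \<Longrightarrow> I = {} \<and> k = 0 \<and> j = 0"
  by (erule alg2_reach.cases) auto

lemma reach_unique:
  "alg2_reach F sim \<rho> \<omega> rule h I k j \<Longrightarrow> alg2_reach F sim \<rho> \<omega> rule h I' k' j' \<Longrightarrow> I' = I \<and> k' = k \<and> j' = j"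
proof (induction arbitrary: I' k' j' rule: alg2_reach.induct)
  case (init \<sigma>)
  then show ?case using reach_snoc_ne by fastforce
next
  case (cont h I k j f \<sigma>')
  from cont.prems show ?case
  proof (cases rule: alg2_reach.cases)
    case (cont h2 I2 k2 j2 \<sigma>2)
    then have "h2 = h" by (simp add: prod_eq_iff)
    then show ?thesis using cont cont.IH by fastforce
  next
    case (new h2 I2 k2 j2 \<sigma>2)
    then have "h2 = h" by (simp add: prod_eq_iff)
    then show ?thesis using new cont.IH cont.hyps by fastforce
  qed auto
next
  case (new h I k j f \<sigma>')
  from new.prems show ?case
  proof (cases rule: alg2_reach.cases)
    case (cont h2 I2 k2 j2 \<sigma>2)
    then have "h2 = h" by (simp add: prod_eq_iff)
    then show ?thesis using cont new.IH new.hyps by fastforce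
  next
    case (new h2 I2 k2 j2 \<sigma>2)
    then have "h2 = h" by (simp add: prod_eq_iff)
    then show ?thesis using new new.IH by fastforce
  qed auto
qed

definition choice :: "'s set set \<Rightarrow> ('s set \<Rightarrow> 's set \<Rightarrow> bool) \<Rightarrow> ('s walk \<Rightarrow> 's set set \<Rightarrow> 's set)
   \<Rightarrow> 's walk \<Rightarrow> 's set set \<Rightarrow> 's set" where
  "choice F sim rule h I = (if I \<noteq> {} \<and> flawsAt F (wlast h) - GamPS F sim I \<noteq> {} then rule h I else rule h {})"

definition strat where
  "strat F sim \<rho> \<omega> rule \<tau> = (if \<exists>I k j. alg2_reach F sim \<rho> \<omega> rule \<tau> I k j
     then choice F sim rule \<tau> (SOME I. \<exists>k j. alg2_reach F sim \<rho> \<omega> rule \<tau> I k j)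
     else (SOME f. f \<in> flawsAt F (wlast \<tau>)))"

lemma strat_eq:
  assumes "alg2_reach F sim \<rho> \<omega> rule h I k j"
  shows "strat F sim \<rho> \<omega> rule h = choice F sim rule h I"
proof -
  have "\<exists>k j. alg2_reach F sim \<rho> \<omega> rule h (SOME I. \<exists>k j. alg2_reach F sim \<rho> \<omega> rule h I k j) k j"
    using assms by (rule someI_ex[where P = "\<lambda>I. \<exists>k j. alg2_reach F sim \<rho> \<omega> rule h I k j", OF exI[of _ I], OF exI, OF exI])
  then have "(SOME I. \<exists>k j. alg2_reach F sim \<rho> \<omega> rule h I k j) = I" using reach_unique assms by blast
  then show ?thesis using assms unfolding strat_def by auto
qed

lemma reach_follows:
  "alg2_reach F sim \<rho> \<omega> rule h I k j \<Longrightarrow> follows (strat F sim \<rho> \<omega> rule) h"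
proof (induction rule: alg2_reach.induct)
  case (init \<sigma>)
  then show ?case by (simp add: follows_def)
next
  case (cont h I k j f \<sigma>')
  have S: "strat F sim \<rho> \<omega> rule h = f"
    using strat_eq[OF cont.hyps(1)] cont.hyps(2,3,4) by (simp add: choice_def)
  show ?case unfolding follows_def
  proof (intro allI impI)
    fix i assume "i < length (snd (fst h, snd h @ [(f, \<sigma>')]))"
    then have "i < length (snd h) \<or> i = length (snd h)" by auto
    then show "fst (snd (fst h, snd h @ [(f, \<sigma>')]) ! i) =
        strat F sim \<rho> \<omega> rule (fst (fst h, snd h @ [(f, \<sigma>')]), take i (snd (fst h, snd h @ [(f, \<sigma>')])))"
      using cont.IH S by (auto simp: follows_def nth_append)
  qed
next
  case (new h I k j f \<sigma>')
  have S: "strat F sim \<rho> \<omega> rule h = f"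
    using strat_eq[OF new.hyps(1)] new.hyps(2,3,4) by (auto simp: choice_def)
  show ?case unfolding follows_def
  proof (intro allI impI)
    fix i assume "i < length (snd (fst h, snd h @ [(f, \<sigma>')]))"
    then have "i < length (snd h) \<or> i = length (snd h)" by auto
    then show "fst (snd (fst h, snd h @ [(f, \<sigma>')]) ! i) =
        strat F sim \<rho> \<omega> rule (fst (fst h, snd h @ [(f, \<sigma>')]), take i (snd (fst h, snd h @ [(f, \<sigma>')])))"
      using new.IH S by (auto simp: follows_def nth_append)
  qed
qed

lemma reach_prefix:
  "alg2_reach F sim \<rho> \<omega> rule h' I' k' j' \<Longrightarrow> alg2_reach F sim \<rho> \<omega> rule h I k j \<Longrightarrow>
   fst h = fst h' \<Longrightarrow> strict_prefix (snd h) (snd h') \<Longrightarrow> k < k' \<or> (k = k' \<and> j < j')"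
proof (induction arbitrary: h I k j rule: alg2_reach.induct)
  case (init \<sigma>)
  then show ?case by simp
next
  case (cont h0 I0 k0 j0 f \<sigma>')
  from cont.prems(3) have "snd h = snd h0 \<or> strict_prefix (snd h) (snd h0)"
    by (auto simp: strict_prefix_def)
  then show ?case
  proof
    assume "snd h = snd h0"
    then have "h = h0" using cont.prems(2) by (simp add: prod_eq_iff)
    then show ?thesis using reach_unique[OF cont.hyps(1) cont.prems(1)[unfolded \<open>h = h0\<close>]] by auto
  next
    assume "strict_prefix (snd h) (snd h0)"
    then show ?thesis using cont.IH[OF cont.prems(1)] cont.prems(2) by auto
  qed
next
  case (new h0 I0 k0 j0 f \<sigma>')
  from new.prems(3) have "snd h = snd h0 \<or> strict_prefix (snd h) (snd h0)"
    by (auto simp: strict_prefix_def)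
  then show ?case
  proof
    assume "snd h = snd h0"
    then have "h = h0" using new.prems(2) by (simp add: prod_eq_iff)
    then show ?thesis using reach_unique[OF new.hyps(1) new.prems(1)[unfolded \<open>h = h0\<close>]] by auto
  next
    assume "strict_prefix (snd h) (snd h0)"
    then show ?thesis using new.IH[OF new.prems(1)] new.prems(2) by auto
  qed
qed

theorem proposition4:
  fixes F :: "'s::finite set set"
    and sim :: "'s set \<Rightarrow> 's set \<Rightarrow> bool"
    and \<rho> :: "'s set \<Rightarrow> 's \<Rightarrow> 's pmf"
    and \<omega> :: "'s pmf"
    and rule :: "'s walk \<Rightarrow> 's set set \<Rightarrow> 's set"
    and s :: nat
  assumes flaws_nonempty: "\<forall>f\<in>F. f \<noteq> {}"
    and sim_sym: "\<forall>f\<in>F. \<forall>g\<in>F. sim f g \<longrightarrow> sim g f"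
    and step: "\<forall>\<sigma> f \<sigma>'. f \<in> flawsAt F \<sigma> \<longrightarrow> \<sigma>' \<in> set_pmf (\<rho> f \<sigma>) \<longrightarrow>
                 flawsAt F \<sigma>' \<subseteq> (flawsAt F \<sigma> - {f}) \<union> Gam F sim f"
    and rule_ok: "\<forall>h I. flawsAt F (wlast h) - GamPS F sim I \<noteq> {} \<longrightarrow>
                 rule h I \<in> flawsAt F (wlast h) - GamPS F sim I"
    and s_pos: "s \<ge> 1"
  shows "(\<forall>\<tau>\<in>BadPar F sim \<rho> \<omega> rule s. longest_chain sim (word \<tau>) = s)
         \<and> valid F \<rho> (BadPar F sim \<rho> \<omega> rule s)"
proof
  show "\<forall>\<tau>\<in>BadPar F sim \<rho> \<omega> rule s. longest_chain sim (word \<tau>) = s"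
  proof
    fix \<tau> assume "\<tau> \<in> BadPar F sim \<rho> \<omega> rule s"
    then obtain I where R: "alg2_reach F sim \<rho> \<omega> rule \<tau> I s 1" by (auto simp: BadPar_def)
    have inv: "(I = {} \<longleftrightarrow> s = 0)"
      "\<And>us. is_chain sim us (word \<tau>) \<Longrightarrow> length us \<le> s"
      "\<And>g. g \<in> I \<Longrightarrow> \<exists>us. is_chain sim us (word \<tau>) \<and> length us = s \<and> us \<noteq> [] \<and> last us = g"
      using chain_inv[OF step rule_ok R] by blast+
    have "I \<noteq> {}" using inv(1) s_pos by simp
    then obtain g where "g \<in> I" by blast
    then obtain us where us: "is_chain sim us (word \<tau>)" "length us = s" using inv(3) by blast
    have fin: "finite (length ` {us. is_chain sim us (word \<tau>)})"
      by (rule finite_subset[of _ "{..length (word \<tau>)}"])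
         (auto simp: is_chain_def dest: list_emb_length)
    show "longest_chain sim (word \<tau>) = s" unfolding longest_chain_def
    proof (rule Max_eqI[OF fin])
      fix y assume "y \<in> length ` {us. is_chain sim us (word \<tau>)}"
      then show "y \<le> s" using inv(2) by blast
    next
      show "s \<in> length ` {us. is_chain sim us (word \<tau>)}" using us by blast
    qed
  qed
  show "valid F \<rho> (BadPar F sim \<rho> \<omega> rule s)" unfolding valid_def
  proof (intro conjI)
    show "\<exists>S. det_strategy F \<rho> S \<and> (\<forall>\<tau>\<in>BadPar F sim \<rho> \<omega> rule s. follows S \<tau>)"
    proof (intro exI conjI ballI)
    show "det_strategy F \<rho> (strat F sim \<rho> \<omega> rule)" unfolding det_strategy_def
    proof (intro allI impI)
      fix \<tau> :: "'s walk" assume ne: "flawsAt F (wlast \<tau>) \<noteq> {}"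
      show "strat F sim \<rho> \<omega> rule \<tau> \<in> flawsAt F (wlast \<tau>)"
      proof (cases "\<exists>I k j. alg2_reach F sim \<rho> \<omega> rule \<tau> I k j")
        case True
        then obtain I k j where "alg2_reach F sim \<rho> \<omega> rule \<tau> I k j" by blast
        then have "strat F sim \<rho> \<omega> rule \<tau> = choice F sim rule \<tau> I" by (rule strat_eq)
        then show ?thesis using rule_ok[rule_format, of \<tau> I] rule_ok[rule_format, of \<tau> "{}"] ne
          by (auto simp: choice_def)
      next
        case False
        then show ?thesis using ne unfolding strat_def by (metis some_in_eq)
      qed
    qed
    fix \<tau> assume "\<tau> \<in> BadPar F sim \<rho> \<omega> rule s"
    then show "follows (strat F sim \<rho> \<omega> rule) \<tau>" by (auto simp: BadPar_def intro: reach_follows)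
    qed
  next
    show "\<forall>\<tau>\<in>BadPar F sim \<rho> \<omega> rule s. \<forall>\<tau>'\<in>BadPar F sim \<rho> \<omega> rule s. \<not> proper_prefix \<tau> \<tau>'"
    proof (intro ballI notI)
      fix \<tau> \<tau>' assume "\<tau> \<in> BadPar F sim \<rho> \<omega> rule s" "\<tau>' \<in> BadPar F sim \<rho> \<omega> rule s"
        and pp: "proper_prefix \<tau> \<tau>'"
      then obtain I I' where "alg2_reach F sim \<rho> \<omega> rule \<tau> I s 1" "alg2_reach F sim \<rho> \<omega> rule \<tau>' I' s 1"
        by (auto simp: BadPar_def)
      from reach_prefix[OF this(2) this(1)] pp show False by (auto simp: proper_prefix_def)
    qed
  qed
qed

end
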